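(* Let $X$ be a topological space (no separation axioms assumed) that is both locally $\mathfrak{c}$ and $\mathfrak{c}$-fair, and let $\kappa\le\mathfrak{c}$ be a regular cardinal such that for every strongly increasing $\kappa$-sequence $\{F_\alpha:\alpha<\kappa\}$ of closed subsets of $X$ the union $\bigcup_{\alpha<\kappa}F_\alpha$ is closed in $X$. If $|X|>\mathfrak{c}$, then for every subset $A\subseteq X$ with $|A|\le\mathfrak{c}$ there exists a clopen subset $U$ of $X$ with $A\subseteq U$, $|U|=\mathfrak{c}$ and $L(U)\ge\kappa$.
   Context: A space $X$ is locally $\mathfrak{c}$ if every point has a neighbourhood of cardinality $\le\mathfrak{c}$. $X$ is $\mathfrak{c}$-fair if the closure of every subset of $X$ of cardinality $\mathfrak{c}$ also has cardinality $\mathfrak{c}$. A $\kappa$-sequence $\{F_\alpha:\alpha<\kappa\}$ of subsets of $X$ is strongly increasing if $F_\alpha\subseteq \operatorname{int}F_{\alpha+1}$ for all $\alpha<\kappa$. $L(U)$ denotes the Lindelöf number of $U$ (the least infinite cardinal $\lambda$ such that every open cover of $U$ has a subcover of size $\le\lambda$). *)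

theory Defs
  imports "HOL-Analysis.Analysis" "HOL-Library.Equipollence"
begin

text \<open>Cardinals are represented as in HOL's BNF cardinal library: a cardinal is a
  well-order relation kappa on some type with Card_order kappa; ordinals below kappa
  are the elements of Field kappa, and the successor alpha+1 of alpha is
  wo_rel.suc kappa {alpha}.  The continuum c is the cardinality of the reals.\<close>

definition locally_c :: "'a topology \<Rightarrow> bool" where
  "locally_c X \<longleftrightarrow> (\<forall>x \<in> topspace X. \<exists>N V. openin X V \<and> x \<in> V \<and> V \<subseteq> N \<and>
      N \<subseteq> topspace X \<and> N \<lesssim> (UNIV :: real set))"

definition c_fair :: "'a topology \<Rightarrow> bool" where
  "c_fair X \<longleftrightarrow> (\<forall>A. A \<subseteq> topspace X \<and> A \<approx> (UNIV :: real set)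
      \<longrightarrow> X closure_of A \<approx> (UNIV :: real set))"

definition strongly_increasing ::
    "'a topology \<Rightarrow> 'k rel \<Rightarrow> ('k \<Rightarrow> 'a set) \<Rightarrow> bool" where
  "strongly_increasing X \<kappa> F \<longleftrightarrow>
     (\<forall>\<alpha> \<in> Field \<kappa>. F \<alpha> \<subseteq> X interior_of (F (wo_rel.suc \<kappa> {\<alpha>})))"

definition covers_bounded_by :: "'a topology \<Rightarrow> 'a set \<Rightarrow> 'b set \<Rightarrow> bool" where
  "covers_bounded_by X U S \<longleftrightarrow>
     (\<forall>\<C>. (\<forall>C \<in> \<C>. openin X C) \<and> U \<subseteq> \<Union>\<C> \<longrightarrow>
        (\<exists>\<D> \<subseteq> \<C>. \<D> \<lesssim> S \<and> U \<subseteq> \<Union>\<D>))"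

text \<open>L(U) >= kappa: since L(U) is the least infinite cardinal lambda such that every
  open cover of U has a subcover of size <= lambda, L(U) >= kappa means that no
  infinite cardinal lambda < kappa has this property.  Cardinals below kappa are
  exactly the cardinalities of subsets of Field kappa of cardinality < kappa.\<close>
definition lindelof_number_ge :: "'a topology \<Rightarrow> 'a set \<Rightarrow> 'k rel \<Rightarrow> bool" where
  "lindelof_number_ge X U \<kappa> \<longleftrightarrow>
     (\<forall>S. S \<subseteq> Field \<kappa> \<and> infinite S \<and> (card_of S, \<kappa>) \<in> ordLess \<longrightarrow> \<not> covers_bounded_by X U S)"

end

theory Submission
  imports Defs
begin

unbundle cardinal_syntax

lemma lep_card: "A \<lesssim> B \<longleftrightarrow> |A| \<le>o |B|"
  by (simp add: lepoll_def card_of_ordLeq[symmetric])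

lemma Un_le: "infinite C \<Longrightarrow> |A| \<le>o |C| \<Longrightarrow> |B| \<le>o |C| \<Longrightarrow> |A \<union> B| \<le>o |C|"
  using card_of_Un_ordLeq_infinite_Field[of "|C|" A B] card_of_Card_order[of C]
  by (simp add: Field_card_of)

theorem theorem4p2:
  fixes X :: "'a topology" and \<kappa> :: "'k rel"
  assumes "locally_c X" and "c_fair X"
    and "Card_order \<kappa>" and "Cinfinite \<kappa>" and "regularCard \<kappa>"
    and "(\<kappa>, card_of (UNIV :: real set)) \<in> ordLeq"
    and "\<forall>F. (\<forall>\<alpha> \<in> Field \<kappa>. closedin X (F \<alpha>)) \<and> strongly_increasing X \<kappa> F
           \<longrightarrow> closedin X (\<Union>\<alpha> \<in> Field \<kappa>. F \<alpha>)"
    and "\<not> topspace X \<lesssim> (UNIV :: real set)"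
  shows "\<forall>A. A \<subseteq> topspace X \<and> A \<lesssim> (UNIV :: real set) \<longrightarrow>
           (\<exists>U. openin X U \<and> closedin X U \<and> A \<subseteq> U \<and> U \<approx> (UNIV :: real set)
                \<and> lindelof_number_ge X U \<kappa>)"
proof (intro allI impI)
  fix A assume A0: "A \<subseteq> topspace X \<and> A \<lesssim> (UNIV :: real set)"
  let ?R = "UNIV :: real set"
  have AX: "A \<subseteq> topspace X" and Ac: "|A| \<le>o |?R|" using A0 lep_card by auto
  have infR: "infinite ?R" by (rule infinite_UNIV_char_0)
  have wo: "wo_rel \<kappa>" using assms(3) by (rule Card_order_wo_rel)
  have Fk: "|Field \<kappa>| \<le>o |?R|"
    using card_of_Field_ordIso[OF assms(3)] assms(6) ordIso_ordLeq_trans by blast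
  have notX: "\<not> |topspace X| \<le>o |?R|" using assms(8) lep_card by auto
  have "|?R| \<le>o |topspace X|"
    using ordLeq_total[OF card_of_Well_order[of "topspace X"] card_of_Well_order[of ?R]] notX by blast
  then obtain f where f: "inj_on f ?R" "f ` ?R \<subseteq> topspace X"
    unfolding card_of_ordLeq[symmetric] by blast
  define D0 where "D0 = f ` ?R"
  have D0X: "D0 \<subseteq> topspace X" using f D0_def by auto
  have D0c: "|D0| \<le>o |?R|" unfolding D0_def by (rule card_of_image)
  have cD0: "|?R| \<le>o |D0|" unfolding D0_def card_of_ordLeq[symmetric]
    using f(1) by blast
  have hull: "\<exists>C. closedin X C \<and> B \<subseteq> X interior_of C \<and> |C| \<le>o |?R|"
    if B: "B \<subseteq> topspace X" "|B| \<le>o |?R|" for B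
  proof -
    have "\<forall>x\<in>B. \<exists>V. openin X V \<and> x \<in> V \<and> |V| \<le>o |?R|"
    proof
      fix x assume "x \<in> B"
      then have "x \<in> topspace X" using B(1) by blast
      then have "\<exists>N V. openin X V \<and> x \<in> V \<and> V \<subseteq> N \<and> N \<subseteq> topspace X \<and> N \<lesssim> ?R"
        using assms(1) unfolding locally_c_def by blast
      then obtain N V where NV: "openin X V" "x \<in> V" "V \<subseteq> N" "N \<lesssim> ?R"
        by blast
      have "|V| \<le>o |?R|"
        using ordLeq_transitive[OF card_of_mono1[OF NV(3)] NV(4)[unfolded lep_card]] .
      then show "\<exists>V. openin X V \<and> x \<in> V \<and> |V| \<le>o |?R|" using NV by blast
    qed
    then obtain V where V: "\<forall>x\<in>B. openin X (V x) \<and> x \<in> V x \<and> |V x| \<le>o |?R|"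
      by metis
    define W where "W = (\<Union>x\<in>B. V x)"
    have Wo: "openin X W" unfolding W_def using V by auto
    have Wc: "|W| \<le>o |?R|" unfolding W_def
      by (rule card_of_UNION_ordLeq_infinite[OF infR B(2)]) (use V in blast)
    have WX: "W \<subseteq> topspace X" using Wo openin_subset by blast
    define E where "E = W \<union> D0"
    have EX: "E \<subseteq> topspace X" using WX D0X E_def by auto
    have Ec: "|E| \<le>o |?R|" unfolding E_def using Un_le[OF infR Wc D0c] .
    have cE: "|?R| \<le>o |E|"
      using ordLeq_transitive[OF cD0 card_of_mono1[of D0 E]] E_def by blast
    have "E \<approx> ?R" unfolding eqpoll_iff_card_of_ordIso ordIso_iff_ordLeq using Ec cE by blast
    then have "X closure_of E \<approx> ?R" using assms(2) EX unfolding c_fair_def by blast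
    then have cl: "|X closure_of E| \<le>o |?R|"
      unfolding eqpoll_iff_card_of_ordIso ordIso_iff_ordLeq by blast
    have "X closure_of W \<subseteq> X closure_of E" using closure_of_mono[of W E X] E_def by blast
    then have "|X closure_of W| \<le>o |?R|"
      using ordLeq_transitive[OF card_of_mono1 cl] by blast
    moreover have "B \<subseteq> X interior_of (X closure_of W)"
    proof -
      have "B \<subseteq> W" unfolding W_def using V by blast
      moreover have "W \<subseteq> X interior_of (X closure_of W)"
        using interior_of_maximal[OF closure_of_subset[OF WX] Wo] .
      ultimately show ?thesis by blast
    qed
    moreover have "closedin X (X closure_of W)" by (rule closedin_closure_of)
    ultimately show ?thesis by blast
  qed
  have ptex: "\<exists>p. p \<in> topspace X - B" if "|B| \<le>o |?R|" for B
  proof (rule ccontr)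
    assume "\<not> ?thesis"
    then have "topspace X \<subseteq> B" by blast
    then show False using ordLeq_transitive[OF card_of_mono1 that] notX by blast
  qed
  define hullf where "hullf B = (SOME C. closedin X C \<and> B \<subseteq> X interior_of C \<and> (card_of C, card_of ?R) \<in> ordLeq)" for B
  define pt where "pt B = (SOME p. p \<in> topspace X - B)" for B
  define low where "low g \<alpha> = (\<Union>\<beta>\<in>underS \<kappa> \<alpha>. g \<beta>)" for g :: "'k \<Rightarrow> 'a set" and \<alpha>
  define G where "G g \<alpha> = hullf (A \<union> D0 \<union> low g \<alpha> \<union> {pt (low g \<alpha>)})" for g \<alpha>
  define F where "F = wo_rel.worec \<kappa> G"
  have adm: "wo_rel.adm_wo \<kappa> G"
    unfolding wo_rel.adm_wo_def[OF wo] G_def low_def by (metis (no_types, lifting) SUP_cong)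
  have FG: "F = G F" unfolding F_def by (rule wo_rel.worec_fixpoint[OF wo adm])
  have Feq: "F \<alpha> = G F \<alpha>" for \<alpha>
    by (subst FG) (rule refl)
  have key: "closedin X (F \<alpha>) \<and> |F \<alpha>| \<le>o |?R| \<and> A \<union> D0 \<union> low F \<alpha> \<subseteq> X interior_of F \<alpha>
      \<and> pt (low F \<alpha>) \<in> F \<alpha> - low F \<alpha>" for \<alpha>
  proof (induction \<alpha> rule: wo_rel.well_order_induct[OF wo])
    case (1 \<alpha>)
    have IH: "closedin X (F \<beta>) \<and> |F \<beta>| \<le>o |?R|" if "\<beta> \<in> underS \<kappa> \<alpha>" for \<beta>
      using 1[rule_format, OF underS_E[OF that]] by blast
    have lX: "low F \<alpha> \<subseteq> topspace X" unfolding low_def using IH closedin_subset by blast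
    have uF: "underS \<kappa> \<alpha> \<subseteq> Field \<kappa>" unfolding underS_def Field_def by blast
    have lc: "|low F \<alpha>| \<le>o |?R|" unfolding low_def
      by (rule card_of_UNION_ordLeq_infinite[OF infR ordLeq_transitive[OF card_of_mono1[OF uF] Fk]])
        (use IH in blast)
    define p where "p = pt (low F \<alpha>)"
    have p: "p \<in> topspace X - low F \<alpha>" unfolding p_def pt_def using someI_ex[OF ptex[OF lc]] .
    define S where "S = A \<union> D0 \<union> low F \<alpha> \<union> {p}"
    have SX: "S \<subseteq> topspace X" using AX D0X lX p S_def by auto
    have sc: "|{p}| \<le>o |?R|" by (rule card_of_singl_ordLeq) simp
    have Sc: "|S| \<le>o |?R|" unfolding S_def
      by (intro Un_le[OF infR] Ac D0c lc sc)
    have h: "closedin X (hullf S) \<and> S \<subseteq> X interior_of (hullf S) \<and> |hullf S| \<le>o |?R|"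
      unfolding hullf_def using someI_ex[OF hull[OF SX Sc]] .
    have FS: "F \<alpha> = hullf S" using Feq[of \<alpha>] unfolding G_def S_def p_def .
    have int: "X interior_of F \<alpha> \<subseteq> F \<alpha>" by (rule interior_of_subset)
    have h': "closedin X (F \<alpha>) \<and> S \<subseteq> X interior_of (F \<alpha>) \<and> |F \<alpha>| \<le>o |?R|"
      using h unfolding FS[symmetric] .
    have c1: "closedin X (F \<alpha>)" using h' by (rule conjunct1)
    have c2: "|F \<alpha>| \<le>o |?R|" using h' by blast
    have SI: "S \<subseteq> X interior_of F \<alpha>" using h' by blast
    have c3: "A \<union> D0 \<union> low F \<alpha> \<subseteq> X interior_of F \<alpha>" using SI unfolding S_def by blast
    have "p \<in> S" unfolding S_def by blast
    then have c4: "p \<in> F \<alpha> - low F \<alpha>" using SI p int by blast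
    show ?case using c1 c2 c3 c4 unfolding p_def by blast
  qed
  have mono: "F \<beta> \<subseteq> F \<alpha>" if "(\<beta>, \<alpha>) \<in> \<kappa>" for \<alpha> \<beta>
  proof (cases "\<beta> = \<alpha>")
    case False
    then have "\<beta> \<in> underS \<kappa> \<alpha>" using that underS_I by metis
    then have "F \<beta> \<subseteq> low F \<alpha>" unfolding low_def by blast
    then show ?thesis using key[of \<alpha>] interior_of_subset[of X "F \<alpha>"] by blast
  qed simp
  have sucp: "wo_rel.suc \<kappa> {\<alpha>} \<in> Field \<kappa> \<and> \<alpha> \<in> underS \<kappa> (wo_rel.suc \<kappa> {\<alpha>})"
    if af: "\<alpha> \<in> Field \<kappa>" for \<alpha>
  proof -
    obtain y where "y \<in> Field \<kappa>" "\<alpha> \<noteq> y" "(\<alpha>, y) \<in> \<kappa>"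
      using Cinfinite_limit[OF af assms(4)] by blast
    then have ab: "AboveS \<kappa> {\<alpha>} \<noteq> {}" unfolding AboveS_def by blast
    have sub: "{\<alpha>} \<subseteq> Field \<kappa>" using af by blast
    show ?thesis using wo_rel.suc_inField[OF wo sub ab] wo_rel.suc_greater[OF wo sub ab]
      underS_I by (metis singletonI)
  qed
  have lowsub: "F \<alpha> \<subseteq> X interior_of F (wo_rel.suc \<kappa> {\<alpha>})" if "\<alpha> \<in> Field \<kappa>" for \<alpha>
  proof -
    have "F \<alpha> \<subseteq> low F (wo_rel.suc \<kappa> {\<alpha>})" using sucp[OF that] unfolding low_def by blast
    then show ?thesis using key by blast
  qed
  define U where "U = (\<Union>\<alpha>\<in>Field \<kappa>. F \<alpha>)"
  have si: "strongly_increasing X \<kappa> F" unfolding strongly_increasing_def using lowsub by blast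
  have Ucl: "closedin X U" unfolding U_def using assms(7) si key by blast
  have Uop: "openin X U"
  proof (subst openin_subopen, intro ballI)
    fix x assume "x \<in> U"
    then obtain \<alpha> where a: "\<alpha> \<in> Field \<kappa>" "x \<in> F \<alpha>" unfolding U_def by blast
    have "X interior_of F (wo_rel.suc \<kappa> {\<alpha>}) \<subseteq> U"
      using sucp[OF a(1)] interior_of_subset[of X] unfolding U_def by blast
    then show "\<exists>T. openin X T \<and> x \<in> T \<and> T \<subseteq> U"
      using lowsub[OF a(1)] a(2) openin_interior_of by blast
  qed
  have fne: "Field \<kappa> \<noteq> {}" using assms(4) unfolding cinfinite_def by auto
  then obtain \<alpha>0 where a0: "\<alpha>0 \<in> Field \<kappa>" by blast
  have AD: "A \<union> D0 \<subseteq> U" using key[of \<alpha>0] interior_of_subset[of X "F \<alpha>0"] a0 unfolding U_def by blast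
  have Uc: "|U| \<le>o |?R|" unfolding U_def
    by (rule card_of_UNION_ordLeq_infinite[OF infR Fk]) (use key in blast)
  have "D0 \<subseteq> U" using AD by blast
  then have cU: "|?R| \<le>o |U|" using ordLeq_transitive[OF cD0 card_of_mono1] by blast
  have Ueq: "U \<approx> ?R" unfolding eqpoll_iff_card_of_ordIso ordIso_iff_ordLeq using Uc cU by blast
  have lind: "lindelof_number_ge X U \<kappa>"
    unfolding lindelof_number_ge_def covers_bounded_by_def
  proof (intro allI impI notI)
    fix S :: "'k set"
    assume S: "S \<subseteq> Field \<kappa> \<and> infinite S \<and> (card_of S, \<kappa>) \<in> ordLess"
    assume H: "\<forall>\<C>. (\<forall>C\<in>\<C>. openin X C) \<and> U \<subseteq> \<Union>\<C> \<longrightarrow> (\<exists>\<D>\<subseteq>\<C>. \<D> \<lesssim> S \<and> U \<subseteq> \<Union>\<D>)"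
    let ?C = "(\<lambda>\<alpha>. X interior_of F \<alpha>) ` Field \<kappa>"
    have "U \<subseteq> \<Union>?C"
    proof
      fix x assume "x \<in> U"
      then obtain \<alpha> where a: "\<alpha> \<in> Field \<kappa>" "x \<in> F \<alpha>" unfolding U_def by blast
      then show "x \<in> \<Union>?C" using lowsub[OF a(1)] sucp[OF a(1)] by blast
    qed
    then have "(\<forall>C\<in>?C. openin X C) \<and> U \<subseteq> \<Union>?C" using openin_interior_of by blast
    from H[rule_format, OF this] obtain \<D> where D: "\<D> \<subseteq> ?C" "\<D> \<lesssim> S" "U \<subseteq> \<Union>\<D>"
      by blast
    from D(1)[unfolded subset_image_inj] obtain I where I: "I \<subseteq> Field \<kappa>"
      "inj_on (\<lambda>\<alpha>. X interior_of F \<alpha>) I" "\<D> = (\<lambda>\<alpha>. X interior_of F \<alpha>) ` I"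
      by blast
    have c1: "|I| \<le>o |\<D>|" unfolding card_of_ordLeq[symmetric] using I(2,3) by blast
    have c2: "|\<D>| \<le>o |S|" using D(2) unfolding lep_card .
    have Ik: "|I| <o \<kappa>" using ordLeq_ordLess_trans[OF ordLeq_transitive[OF c1 c2]] S by blast
    have "\<not> cofinal I \<kappa>"
      using assms(5) I(1) not_ordLess_ordIso[OF Ik] unfolding regularCard_def by blast
    then obtain a where a: "a \<in> Field \<kappa>" "\<forall>b\<in>I. \<not> (a \<noteq> b \<and> (a, b) \<in> \<kappa>)"
      unfolding cofinal_def by blast
    have Fba: "F b \<subseteq> F a" if b: "b \<in> I" for b
    proof -
      have bF: "b \<in> Field \<kappa>" using b I(1) by blast
      have "(a, b) \<in> \<kappa> \<or> (b, a) \<in> \<kappa>" using wo_rel.TOTALS[OF wo] a(1) bF by blast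
      moreover have "a = b \<or> (a, b) \<notin> \<kappa>" using a(2) b by blast
      ultimately have "(b, a) \<in> \<kappa>" by blast
      then show ?thesis by (rule mono)
    qed
    have "\<Union>\<D> \<subseteq> F a"
    proof
      fix x assume "x \<in> \<Union>\<D>"
      then obtain b where b: "b \<in> I" "x \<in> X interior_of F b" using I(3) by blast
      then have "x \<in> F b" using interior_of_subset[of X "F b"] by blast
      then show "x \<in> F a" using Fba[OF b(1)] by blast
    qed
    then have UFa: "U \<subseteq> F a" using D(3) by blast
    define s where "s = wo_rel.suc \<kappa> {a}"
    have s: "s \<in> Field \<kappa>" "a \<in> underS \<kappa> s" using sucp[OF a(1)] s_def by auto
    have "pt (low F s) \<in> U" using key[of s] s(1) unfolding U_def by blast
    moreover have "F a \<subseteq> low F s" using s(2) unfolding low_def by blast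
    ultimately show False using key[of s] UFa by blast
  qed
  show "\<exists>U. openin X U \<and> closedin X U \<and> A \<subseteq> U \<and> U \<approx> ?R \<and> lindelof_number_ge X U \<kappa>"
    using Uop Ucl AD Ueq lind by blast
qed

end
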